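(* Let $q\in\mathcal Q_0$ and assume that $\pi(B^\complement_{r,0})>0$ for all $r>0$, and that for every $\delta>0$ there exists $v>0$ with $\sup_{\theta\in B^\complement_{v,0}}h(\theta)<\delta$. Then $P_{2,N}$ is not variance bounding, for every $N\in\mathbb N$.
   Context: Let $\Theta$ and $\mathsf Y$ be metric spaces; $B_{r,z}$ is the ball of radius $r$ about $z$, $B^\complement$ its complement, $0$ a fixed reference point in $\Theta$. Densities on $\Theta$ are w.r.t. a common dominating measure. Fix data $y\in\mathsf Y$, $\epsilon>0$, a prior density $p$ (possibly improper), likelihood densities $f_\theta$ on $\mathsf Y$; $h(\theta)=f_\theta(B_{\epsilon,y})$, $w(x)=I(y\in B_{\epsilon,x})$, $H=\int ph\in(0,\infty)$, $\pi=ph/H$. Let $q(\theta,\cdot)$ be a proposal density and $c(\theta,\vartheta)=p(\theta)q(\theta,\vartheta)$. $P_{2,N}$ is the kernel $P(\theta,\mathrm d\vartheta)=q(\theta,\mathrm d\vartheta)\alpha(\theta,\vartheta)+\{1-\int q(\theta,\mathrm d\theta')\alpha(\theta,\theta')\}\delta_\theta(\mathrm d\vartheta)$ with $\alpha_{2,N}(\theta,\vartheta)=\int\int[1\wedge\frac{c(\vartheta,\theta)\sum_{j=1}^N w(z_j)}{c(\theta,\vartheta)\{1+\sum_{j=1}^{N-1}w(x_j)\}}]f_\theta^{\otimes N-1}(\mathrm dx_{1:N-1})f_\vartheta^{\otimes N}(\mathrm dz_{1:N})$; it is $\pi$-reversible. A reversible kernel is variance bounding if $\sup\sigma_0(P)<1$,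 $\sigma_0(P)$ its spectrum on $L^2_0(\pi)$. $\mathcal Q_0$ is the set of proposals $q$ such that for all $\delta>0$ and $r>0$ there exists $R>0$ with $q(\theta,B_{r,0})<\delta$ for all $\theta\in B^\complement_{R,0}$ (e.g. autoregressive proposals $q(\theta,\vartheta)=\mathcal N(\vartheta;\rho\theta,\sigma^2)$, $\rho\in(0,1)$). *)

theory Defs
  imports "HOL-Probability.Probability"
begin

text \<open>L^2_0(M): square-integrable, measurable real functions with mean zero
  (elements are functions; equality in L^2 is almost-everywhere equality).\<close>
definition L2_0 :: "'a measure \<Rightarrow> ('a \<Rightarrow> real) set" where
  "L2_0 M = {f \<in> borel_measurable M. integrable M (\<lambda>x. (f x)\<^sup>2) \<and> integral\<^sup>L M f = 0}"

text \<open>Spectrum of the (bounded, self-adjoint) operator T on L^2_0(M):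
  the real numbers l such that T - l I is not a bijection of L^2_0(M)
  (modulo a.e. equality). For bounded operators bijectivity implies a bounded
  inverse (open mapping theorem); for self-adjoint operators the spectrum is real.\<close>
definition spectrum0 :: "'a measure \<Rightarrow> (('a \<Rightarrow> real) \<Rightarrow> 'a \<Rightarrow> real) \<Rightarrow> real set" where
  "spectrum0 M T = {l. \<not> ((\<forall>g\<in>L2_0 M. \<exists>f\<in>L2_0 M. AE x in M. T f x - l * f x = g x)
                         \<and> (\<forall>f\<in>L2_0 M. (AE x in M. T f x = l * f x) \<longrightarrow> (AE x in M. f x = 0)))}"

definition variance_bounding :: "'a measure \<Rightarrow> (('a \<Rightarrow> real) \<Rightarrow> 'a \<Rightarrow> real) \<Rightarrow> bool" where
  "variance_bounding M T \<longleftrightarrow> (\<exists>c<1. \<forall>l\<in>spectrum0 M T. l \<le> c)"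

definition wfun :: "'b::metric_space \<Rightarrow> real \<Rightarrow> 'b \<Rightarrow> real" where
  "wfun y \<epsilon> x = indicator (ball x \<epsilon>) y"

definition hfun :: "'b measure \<Rightarrow> ('a \<Rightarrow> 'b \<Rightarrow> real) \<Rightarrow> 'b::metric_space \<Rightarrow> real \<Rightarrow> 'a \<Rightarrow> real" where
  "hfun \<nu> f y \<epsilon> \<theta> = enn2real (\<integral>\<^sup>+ x \<in> ball y \<epsilon>. ennreal (f \<theta> x) \<partial>\<nu>)"

definition Hconst :: "'a measure \<Rightarrow> ('a \<Rightarrow> real) \<Rightarrow> 'b measure \<Rightarrow> ('a \<Rightarrow> 'b \<Rightarrow> real) \<Rightarrow> 'b::metric_space \<Rightarrow> real \<Rightarrow> ennreal" where
  "Hconst \<mu> p \<nu> f y \<epsilon> = (\<integral>\<^sup>+ \<theta>. ennreal (p \<theta> * hfun \<nu> f y \<epsilon> \<theta>) \<partial>\<mu>)"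

definition post :: "'a measure \<Rightarrow> ('a \<Rightarrow> real) \<Rightarrow> 'b measure \<Rightarrow> ('a \<Rightarrow> 'b \<Rightarrow> real) \<Rightarrow> 'b::metric_space \<Rightarrow> real \<Rightarrow> 'a measure" where
  "post \<mu> p \<nu> f y \<epsilon> = density \<mu> (\<lambda>\<theta>. ennreal (p \<theta> * hfun \<nu> f y \<epsilon> \<theta> / enn2real (Hconst \<mu> p \<nu> f y \<epsilon>)))"

definition cfun :: "('a \<Rightarrow> real) \<Rightarrow> ('a \<Rightarrow> 'a \<Rightarrow> real) \<Rightarrow> 'a \<Rightarrow> 'a \<Rightarrow> real" where
  "cfun p q \<theta> t = p \<theta> * q \<theta> t"

text \<open>alpha_{2,N}(theta, theta'): x_{1:N-1} iid f_theta, z_{1:N} iid f_theta'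
  (indices shifted to start at 0).\<close>
definition alpha2N :: "'b measure \<Rightarrow> ('a \<Rightarrow> 'b \<Rightarrow> real) \<Rightarrow> ('a \<Rightarrow> real) \<Rightarrow> ('a \<Rightarrow> 'a \<Rightarrow> real)
      \<Rightarrow> 'b::metric_space \<Rightarrow> real \<Rightarrow> nat \<Rightarrow> 'a \<Rightarrow> 'a \<Rightarrow> real" where
  "alpha2N \<nu> f p q y \<epsilon> N \<theta> t =
     (\<integral> xs. (\<integral> zs. min 1 ((cfun p q t \<theta> * (\<Sum>j<N. wfun y \<epsilon> (zs j)))
                           / (cfun p q \<theta> t * (1 + (\<Sum>j<N - 1. wfun y \<epsilon> (xs j)))))
              \<partial>(PiM {..<N} (\<lambda>_. density \<nu> (\<lambda>x. ennreal (f t x)))))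
        \<partial>(PiM {..<N - 1} (\<lambda>_. density \<nu> (\<lambda>x. ennreal (f \<theta> x)))))"

text \<open>Action of a Metropolis--Hastings kernel
  P(theta,d theta') = q(theta,d theta') alpha(theta,theta')
     + {1 - int q(theta,d theta'') alpha(theta,theta'')} delta_theta(d theta')
  on a function g: (Pg)(theta) = int g(theta') P(theta, d theta').\<close>
definition mh_op :: "'a measure \<Rightarrow> ('a \<Rightarrow> 'a \<Rightarrow> real) \<Rightarrow> ('a \<Rightarrow> 'a \<Rightarrow> real)
      \<Rightarrow> ('a \<Rightarrow> real) \<Rightarrow> 'a \<Rightarrow> real" where
  "mh_op \<mu> q \<alpha> g \<theta> = (\<integral> t. q \<theta> t * \<alpha> \<theta> t * g t \<partial>\<mu>)
      + (1 - (\<integral> t. q \<theta> t * \<alpha> \<theta> t \<partial>\<mu>)) * g \<theta>"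

definition P2N_op where
  "P2N_op \<mu> \<nu> f p q y \<epsilon> N = mh_op \<mu> q (alpha2N \<nu> f p q y \<epsilon> N)"

definition Q0 :: "'a measure \<Rightarrow> 'a::metric_space \<Rightarrow> ('a \<Rightarrow> 'a \<Rightarrow> real) \<Rightarrow> bool" where
  "Q0 \<mu> \<theta>0 q \<longleftrightarrow> (\<forall>\<delta>>0. \<forall>r>0. \<exists>R>0. \<forall>\<theta>\<in>- ball \<theta>0 R.
      enn2real (\<integral>\<^sup>+ t \<in> ball \<theta>0 r. ennreal (q \<theta> t) \<partial>\<mu>) < \<delta>)"

end

theory Submission
  imports Defs
begin

locale P4 =
  fixes \<mu> :: "'a::metric_space measure" and \<nu> :: "'b::metric_space measure"
    and p :: "'a \<Rightarrow> real" and f :: "'a \<Rightarrow> 'b \<Rightarrow> real" and q :: "'a \<Rightarrow> 'a \<Rightarrow> real"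
    and y :: 'b and \<epsilon> :: real and \<theta>0 :: 'a and N :: nat
  assumes sets_mu: "sets \<mu> = sets borel" and sf_mu: "sigma_finite_measure \<mu>"
    and sets_nu: "sets \<nu> = sets borel" and sf_nu: "sigma_finite_measure \<nu>"
    and eps: "\<epsilon> > 0"
    and p_meas: "p \<in> borel_measurable \<mu>" and p_nonneg: "\<And>\<theta>. p \<theta> \<ge> 0"
    and f_meas: "(\<lambda>(\<theta>, x). f \<theta> x) \<in> borel_measurable (\<mu> \<Otimes>\<^sub>M \<nu>)"
    and f_nonneg: "\<And>\<theta> x. f \<theta> x \<ge> 0"
    and f_dens: "\<And>\<theta>. (\<integral>\<^sup>+ x. ennreal (f \<theta> x) \<partial>\<nu>) = 1"
    and q_meas: "(\<lambda>(\<theta>, t). q \<theta> t) \<in> borel_measurable (\<mu> \<Otimes>\<^sub>M \<mu>)"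
    and q_nonneg: "\<And>\<theta> t. q \<theta> t \<ge> 0"
    and q_dens: "\<And>\<theta>. (\<integral>\<^sup>+ t. ennreal (q \<theta> t) \<partial>\<mu>) = 1"
    and H_pos: "0 < Hconst \<mu> p \<nu> f y \<epsilon>" and H_fin: "Hconst \<mu> p \<nu> f y \<epsilon> < \<infinity>"
    and q_Q0: "Q0 \<mu> \<theta>0 q"
    and pi_tails: "\<And>r. r > 0 \<Longrightarrow> emeasure (post \<mu> p \<nu> f y \<epsilon>) (- ball \<theta>0 r) > 0"
    and h_tails: "\<And>\<delta>. \<delta> > 0 \<Longrightarrow> \<exists>v>0. (SUP \<theta>\<in>- ball \<theta>0 v. hfun \<nu> f y \<epsilon> \<theta>) < \<delta>"
    and N_pos: "N \<ge> 1"
begin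

abbreviation "h \<equiv> hfun \<nu> f y \<epsilon>"

lemma ball_nu[measurable]: "ball y \<epsilon> \<in> sets \<nu>"
  using sets_nu by simp

lemma ball_mu[measurable]: "ball \<theta>0 r \<in> sets \<mu>"
  using sets_mu by simp

lemma f_meas'[measurable]: "(\<lambda>x. f (fst x) (snd x)) \<in> borel_measurable (\<mu> \<Otimes>\<^sub>M \<nu>)"
  using f_meas by (simp add: case_prod_beta')

lemma q_meas'[measurable]: "(\<lambda>x. q (fst x) (snd x)) \<in> borel_measurable (\<mu> \<Otimes>\<^sub>M \<mu>)"
  using q_meas by (simp add: case_prod_beta')

lemma p_meas'[measurable]: "p \<in> borel_measurable \<mu>" by (rule p_meas)

lemma space_mu[simp]: "space \<mu> = UNIV"
  using sets_eq_imp_space_eq[OF sets_mu] by simp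

lemma space_nu[simp]: "space \<nu> = UNIV"
  using sets_eq_imp_space_eq[OF sets_nu] by simp

lemma f_sec[measurable]: "f t \<in> borel_measurable \<nu>"
  using measurable_Pair2[OF f_meas, of t] by simp

lemma q_sec[measurable]: "q t \<in> borel_measurable \<mu>"
  using measurable_Pair2[OF q_meas, of t] by simp

lemma h_nonneg: "0 \<le> h \<theta>" unfolding hfun_def by simp

lemma h_le1: "h \<theta> \<le> 1"
proof -
  have "(\<integral>\<^sup>+ x. ennreal (f \<theta> x) * indicator (ball y \<epsilon>) x \<partial>\<nu>) \<le> (\<integral>\<^sup>+ x. ennreal (f \<theta> x) \<partial>\<nu>)"
    by (intro nn_integral_mono) (auto simp: indicator_def)
  then have "(\<integral>\<^sup>+ x. ennreal (f \<theta> x) * indicator (ball y \<epsilon>) x \<partial>\<nu>) \<le> 1" using f_dens by simp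
  then show ?thesis unfolding hfun_def
    by (metis enn2real_mono enn2real_1 ennreal_one_less_top)
qed

lemma h_meas[measurable]: "h \<in> borel_measurable \<mu>"
proof -
  interpret nu: sigma_finite_measure \<nu> by (rule sf_nu)
  have "(\<lambda>\<theta>. \<integral>\<^sup>+ x. ennreal (f \<theta> x) * indicator (ball y \<epsilon>) x \<partial>\<nu>) \<in> borel_measurable \<mu>"
    by measurable
  then show ?thesis unfolding hfun_def by measurable
qed

abbreviation "Dt t \<equiv> density \<nu> (\<lambda>x. ennreal (f t x))"

lemma Dt_prob: "prob_space (Dt t)"
proof (rule prob_spaceI)
  have "emeasure (Dt t) (space \<nu>) = (\<integral>\<^sup>+ x. ennreal (f t x) * indicator (space \<nu>) x \<partial>\<nu>)"
    by (rule emeasure_density) (auto simp: sets_nu)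
  also have "\<dots> = (\<integral>\<^sup>+ x. ennreal (f t x) \<partial>\<nu>)"
    by (intro nn_integral_cong) auto
  finally show "emeasure (Dt t) (space (Dt t)) = 1" using f_dens by simp
qed

lemma Dt_meas_f[measurable]: "(\<lambda>x. ennreal (f t x)) \<in> borel_measurable \<nu>"
  by measurable

lemma wfun_eq: "wfun y \<epsilon> z = indicator (ball y \<epsilon>) z"
  by (simp add: wfun_def indicator_def dist_commute)

lemma int_w: "(\<integral> z. wfun y \<epsilon> z \<partial>Dt t) = h t"
proof -
  have "(\<integral> z. wfun y \<epsilon> z \<partial>Dt t) = measure (Dt t) (ball y \<epsilon> \<inter> space (Dt t))"
    by (simp add: wfun_eq[abs_def])
  also have "\<dots> = measure (Dt t) (ball y \<epsilon>)" by simp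
  also have "\<dots> = enn2real (emeasure (Dt t) (ball y \<epsilon>))" by (simp add: measure_def)
  also have "emeasure (Dt t) (ball y \<epsilon>) = (\<integral>\<^sup>+ x. ennreal (f t x) * indicator (ball y \<epsilon>) x \<partial>\<nu>)"
    by (rule emeasure_density) auto
  finally show ?thesis by (simp add: hfun_def)
qed

lemma int_S:
  "(\<integral> zs. (\<Sum>j<n. wfun y \<epsilon> (zs j)) \<partial>PiM {..<n} (\<lambda>_. Dt t)) = real n * h t"
    and int_S_integrable: "integrable (PiM {..<n} (\<lambda>_. Dt t)) (\<lambda>zs. \<Sum>j<n. wfun y \<epsilon> (zs j))"
proof -
  interpret pp: product_prob_space "\<lambda>_. Dt t" "{..<n}"
    by (intro product_prob_spaceI Dt_prob)
  have wm[measurable]: "wfun y \<epsilon> \<in> borel_measurable (Dt t)"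
    unfolding wfun_eq[abs_def] by simp
  have int1: "integrable (PiM {..<n} (\<lambda>_. Dt t)) (\<lambda>zs. wfun y \<epsilon> (zs j))" if "j < n" for j
  proof (rule pp.P.integrable_const_bound[where B=1])
    show "AE x in PiM {..<n} (\<lambda>_. Dt t). norm (wfun y \<epsilon> (x j)) \<le> 1"
      by (simp add: wfun_eq indicator_def)
    show "(\<lambda>zs. wfun y \<epsilon> (zs j)) \<in> borel_measurable (PiM {..<n} (\<lambda>_. Dt t))"
    proof (rule measurable_compose[OF _ wm])
      show "(\<lambda>zs. zs j) \<in> PiM {..<n} (\<lambda>_. Dt t) \<rightarrow>\<^sub>M Dt t"
        using measurable_component_singleton[of j "{..<n}" "\<lambda>_. Dt t"] that by simp
    qed
  qed
  have eq1: "(\<integral> zs. wfun y \<epsilon> (zs j) \<partial>PiM {..<n} (\<lambda>_. Dt t)) = h t" if "j < n" for j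
  proof -
    have "(\<integral> zs. wfun y \<epsilon> (zs j) \<partial>PiM {..<n} (\<lambda>_. Dt t))
        = (\<integral> z. wfun y \<epsilon> z \<partial>distr (PiM {..<n} (\<lambda>_. Dt t)) (Dt t) (\<lambda>zs. zs j))"
      by (rule integral_distr[symmetric]) (use that in \<open>auto\<close>)
    also have "\<dots> = (\<integral> z. wfun y \<epsilon> z \<partial>Dt t)"
      using pp.PiM_component[of j] that by simp
    finally show ?thesis using int_w by simp
  qed
  show "integrable (PiM {..<n} (\<lambda>_. Dt t)) (\<lambda>zs. \<Sum>j<n. wfun y \<epsilon> (zs j))"
    using int1 by auto
  have "(\<integral> zs. (\<Sum>j<n. wfun y \<epsilon> (zs j)) \<partial>PiM {..<n} (\<lambda>_. Dt t))
       = (\<Sum>j<n. \<integral> zs. wfun y \<epsilon> (zs j) \<partial>PiM {..<n} (\<lambda>_. Dt t))"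
    by (rule Bochner_Integration.integral_sum) (use int1 in auto)
  also have "\<dots> = real n * h t" using eq1 by simp
  finally show "(\<integral> zs. (\<Sum>j<n. wfun y \<epsilon> (zs j)) \<partial>PiM {..<n} (\<lambda>_. Dt t)) = real n * h t" .
qed

lemma int_le:
  fixes F G :: "_ \<Rightarrow> real"
  assumes "integrable M G" "\<And>x. x \<in> space M \<Longrightarrow> F x \<le> G x" "0 \<le> integral\<^sup>L M G"
  shows "integral\<^sup>L M F \<le> integral\<^sup>L M G"
proof (cases "integrable M F")
  case True
  then show ?thesis using assms by (intro integral_mono) auto
next
  case False
  then show ?thesis using assms by (simp add: not_integrable_integral_eq)
qed

lemma PiM_Dt_prob: "prob_space (PiM I (\<lambda>_. Dt t))"
  by (intro prob_space_PiM Dt_prob)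

lemma alpha_le_gen:
  fixes F :: "_ \<Rightarrow> _ \<Rightarrow> real"
  assumes G: "integrable (PiM {..<N} (\<lambda>_. Dt t)) G" "0 \<le> integral\<^sup>L (PiM {..<N} (\<lambda>_. Dt t)) G"
    and le: "\<And>xs zs. F xs zs \<le> G zs"
  shows "(\<integral> xs. (\<integral> zs. F xs zs \<partial>PiM {..<N} (\<lambda>_. Dt t)) \<partial>PiM {..<N-1} (\<lambda>_. Dt \<theta>))
          \<le> integral\<^sup>L (PiM {..<N} (\<lambda>_. Dt t)) G"
proof -
  interpret P: prob_space "PiM {..<N-1} (\<lambda>_. Dt \<theta>)" by (rule PiM_Dt_prob)
  let ?c = "integral\<^sup>L (PiM {..<N} (\<lambda>_. Dt t)) G"
  have "(\<integral> xs. (\<integral> zs. F xs zs \<partial>PiM {..<N} (\<lambda>_. Dt t)) \<partial>PiM {..<N-1} (\<lambda>_. Dt \<theta>))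
      \<le> (\<integral> xs. ?c \<partial>PiM {..<N-1} (\<lambda>_. Dt \<theta>))"
  proof (rule int_le)
    show "integrable (PiM {..<N-1} (\<lambda>_. Dt \<theta>)) (\<lambda>_. ?c)" by (rule P.integrable_const)
    show "(\<integral> zs. F xs zs \<partial>PiM {..<N} (\<lambda>_. Dt t)) \<le> ?c" for xs
      by (rule int_le) (use G le in auto)
    show "0 \<le> (\<integral> xs. ?c \<partial>PiM {..<N-1} (\<lambda>_. Dt \<theta>))" using G by simp
  qed
  also have "\<dots> = ?c" using P.prob_space by simp
  finally show ?thesis .
qed

abbreviation "S zs \<equiv> (\<Sum>j<N. wfun y \<epsilon> (zs j))"
abbreviation "Sx xs \<equiv> (\<Sum>j<N-1. wfun y \<epsilon> (xs j))"
abbreviation "Fr \<theta> t xs zs \<equiv> min 1 ((cfun p q t \<theta> * S zs) / (cfun p q \<theta> t * (1 + Sx xs)))"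

lemma wfun_nonneg: "0 \<le> wfun y \<epsilon> z" by (simp add: wfun_def)

lemma S_nonneg: "0 \<le> (\<Sum>j<n. wfun y \<epsilon> (zs j))" by (intro sum_nonneg wfun_nonneg)

lemma cfun_nonneg: "0 \<le> cfun p q a b" by (simp add: cfun_def p_nonneg q_nonneg)

lemma Fr_nonneg: "0 \<le> Fr \<theta> t xs zs"
  by (intro min.boundedI divide_nonneg_nonneg mult_nonneg_nonneg cfun_nonneg S_nonneg add_nonneg_nonneg) auto

lemma Fr_le_S: "Fr \<theta> t xs zs \<le> S zs"
proof (cases "S zs = 0")
  case True then show ?thesis by simp
next
  case False
  then obtain j where j: "j < N" "wfun y \<epsilon> (zs j) \<noteq> 0"
    by (metis (no_types, lifting) lessThan_iff sum.neutral)
  then have "wfun y \<epsilon> (zs j) = 1" by (simp add: wfun_def indicator_def split: if_splits)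
  moreover have "wfun y \<epsilon> (zs j) \<le> S zs"
    using j by (intro member_le_sum wfun_nonneg) auto
  ultimately show ?thesis by linarith
qed

lemma Fr_le_ratio: "Fr \<theta> t xs zs \<le> (cfun p q t \<theta> / cfun p q \<theta> t) * S zs"
proof -
  have a: "0 \<le> cfun p q t \<theta> * S zs" by (intro mult_nonneg_nonneg cfun_nonneg S_nonneg)
  have b: "0 \<le> Sx xs" by (rule S_nonneg)
  have "(cfun p q t \<theta> * S zs) / (cfun p q \<theta> t * (1 + Sx xs)) \<le> (cfun p q t \<theta> * S zs) / cfun p q \<theta> t"
  proof (cases "cfun p q \<theta> t = 0")
    case True then show ?thesis by simp
  next
    case False
    then have "0 < cfun p q \<theta> t" using cfun_nonneg[of \<theta> t] by simp
    then show ?thesis using a b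
      by (intro divide_left_mono) (auto intro!: mult_pos_pos)
  qed
  then show ?thesis by (simp add: min.coboundedI2)
qed

lemma alpha_nonneg: "0 \<le> alpha2N \<nu> f p q y \<epsilon> N \<theta> t"
  unfolding alpha2N_def using Fr_nonneg by (intro integral_nonneg_AE AE_I2) auto

lemma alpha_le1: "alpha2N \<nu> f p q y \<epsilon> N \<theta> t \<le> 1"
proof -
  interpret P: prob_space "PiM {..<N} (\<lambda>_. Dt t)" by (rule PiM_Dt_prob)
  have "alpha2N \<nu> f p q y \<epsilon> N \<theta> t \<le> integral\<^sup>L (PiM {..<N} (\<lambda>_. Dt t)) (\<lambda>_. 1::real)"
    unfolding alpha2N_def by (rule alpha_le_gen) auto
  then show ?thesis by (simp add: P.prob_space)
qed

lemma alpha_le_cS: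
  assumes "0 \<le> c" "\<And>xs zs. Fr \<theta> t xs zs \<le> c * S zs"
  shows "alpha2N \<nu> f p q y \<epsilon> N \<theta> t \<le> c * (real N * h t)"
proof -
  have "alpha2N \<nu> f p q y \<epsilon> N \<theta> t \<le> integral\<^sup>L (PiM {..<N} (\<lambda>_. Dt t)) (\<lambda>zs. c * S zs)"
    unfolding alpha2N_def
  proof (rule alpha_le_gen)
    show "integrable (PiM {..<N} (\<lambda>_. Dt t)) (\<lambda>zs. c * S zs)"
      using int_S_integrable by simp
    show "0 \<le> integral\<^sup>L (PiM {..<N} (\<lambda>_. Dt t)) (\<lambda>zs. c * S zs)"
      using int_S[of N t] assms(1) h_nonneg by simp
  qed (use assms in auto)
  then show ?thesis using int_S[of N t] by simp
qed

lemma alpha_le_Nh: "alpha2N \<nu> f p q y \<epsilon> N \<theta> t \<le> real N * h t"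
  using alpha_le_cS[where c=1 and \<theta>=\<theta> and t=t] Fr_le_S by simp

lemma alpha_le_ratio: "alpha2N \<nu> f p q y \<epsilon> N \<theta> t \<le> (cfun p q t \<theta> / cfun p q \<theta> t) * (real N * h t)"
  using alpha_le_cS[where c="cfun p q t \<theta> / cfun p q \<theta> t" and \<theta>=\<theta> and t=t] Fr_le_ratio cfun_nonneg
  by (simp add: divide_nonneg_nonneg)

abbreviation "\<alpha> \<equiv> alpha2N \<nu> f p q y \<epsilon> N"

definition "B \<theta> t = min (q \<theta> t) (min (q \<theta> t * (real N * h t)) (real N * p t * q t \<theta> * h t / p \<theta>))"

lemma B_nonneg: "0 \<le> B \<theta> t"
  unfolding B_def using q_nonneg p_nonneg h_nonneg by (auto intro!: divide_nonneg_nonneg)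

lemma B_le_q: "B \<theta> t \<le> q \<theta> t"
  unfolding B_def by simp

lemma qa_nonneg: "0 \<le> q \<theta> t * \<alpha> \<theta> t"
  using q_nonneg alpha_nonneg by simp

lemma qa_le_B: "q \<theta> t * \<alpha> \<theta> t \<le> B \<theta> t"
proof -
  have 1: "q \<theta> t * \<alpha> \<theta> t \<le> q \<theta> t"
    using alpha_le1[of \<theta> t] q_nonneg[of \<theta> t] by (simp add: mult_left_le)
  have 2: "q \<theta> t * \<alpha> \<theta> t \<le> q \<theta> t * (real N * h t)"
    using alpha_le_Nh[of \<theta> t] q_nonneg[of \<theta> t] by (simp add: mult_left_mono)
  have 3: "q \<theta> t * \<alpha> \<theta> t \<le> real N * p t * q t \<theta> * h t / p \<theta>"
  proof (cases "q \<theta> t = 0 \<or> p \<theta> = 0")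
    case True
    moreover have "p \<theta> = 0 \<Longrightarrow> \<alpha> \<theta> t \<le> 0"
      using alpha_le_ratio[of \<theta> t] by (simp add: cfun_def)
    ultimately have "q \<theta> t * \<alpha> \<theta> t \<le> 0"
      using q_nonneg[of \<theta> t] by (auto simp: mult_nonneg_nonpos)
    moreover have "0 \<le> real N * p t * q t \<theta> * h t / p \<theta>"
      using q_nonneg p_nonneg h_nonneg by (auto intro!: divide_nonneg_nonneg)
    ultimately show ?thesis by linarith
  next
    case False
    then have qp: "0 < q \<theta> t" "0 < p \<theta>" using q_nonneg[of \<theta> t] p_nonneg[of \<theta>] by auto
    have "q \<theta> t * \<alpha> \<theta> t \<le> q \<theta> t * ((cfun p q t \<theta> / cfun p q \<theta> t) * (real N * h t))"
      using alpha_le_ratio[of \<theta> t] qp by (intro mult_left_mono) auto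
    also have "\<dots> = real N * p t * q t \<theta> * h t / p \<theta>"
      using qp by (simp add: cfun_def field_simps)
    finally show ?thesis .
  qed
  show ?thesis unfolding B_def using 1 2 3 by simp
qed

lemma q_swap_meas[measurable]: "(\<lambda>x. q (snd x) (fst x)) \<in> borel_measurable (\<mu> \<Otimes>\<^sub>M \<mu>)"
  using measurable_compose[OF measurable_pair_swap' q_meas'] by (simp add: case_prod_beta')

lemma h_meas_snd[measurable]: "(\<lambda>x. h (snd x)) \<in> borel_measurable (\<mu> \<Otimes>\<^sub>M \<mu>)"
  by measurable

lemma B_meas[measurable]: "(\<lambda>x. B (fst x) (snd x)) \<in> borel_measurable (\<mu> \<Otimes>\<^sub>M \<mu>)"
  unfolding B_def by measurable

definition "A \<theta> = (\<integral>\<^sup>+ t. ennreal (B \<theta> t) \<partial>\<mu>)"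

lemma A_meas[measurable]: "A \<in> borel_measurable \<mu>"
proof -
  interpret mu: sigma_finite_measure \<mu> by (rule sf_mu)
  show ?thesis unfolding A_def by measurable
qed

lemma A_le1: "A \<theta> \<le> 1"
proof -
  have "A \<theta> \<le> (\<integral>\<^sup>+ t. ennreal (q \<theta> t) \<partial>\<mu>)"
    unfolding A_def by (intro nn_integral_mono ennreal_leI B_le_q)
  then show ?thesis using q_dens by simp
qed

lemma A_fin: "A \<theta> \<noteq> \<infinity>"
  using A_le1[of \<theta>] by (auto simp: top_unique)

lemma A_tails: "\<delta> > 0 \<Longrightarrow> \<exists>R>0. \<forall>\<theta>\<in>- ball \<theta>0 R. A \<theta> < ennreal \<delta>"
proof -
  assume d: "\<delta> > 0"
  then have "\<delta> / (2 * real N) > 0" using N_pos by simp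
  from h_tails[OF this] obtain v where v: "v > 0" "(SUP \<theta>\<in>- ball \<theta>0 v. h \<theta>) < \<delta> / (2 * real N)"
    by blast
  have hv: "h t < \<delta> / (2 * real N)" if "t \<in> - ball \<theta>0 v" for t
  proof -
    have "bdd_above (h ` (- ball \<theta>0 v))" using h_le1 by (intro bdd_aboveI2) auto
    then have "h t \<le> (SUP \<theta>\<in>- ball \<theta>0 v. h \<theta>)" using that by (rule cSUP_upper2) auto
    then show ?thesis using v by linarith
  qed
  have "\<delta>/2 > 0" using d by simp
  from q_Q0[unfolded Q0_def, rule_format, OF this v(1)] obtain R where
    R: "R > 0" "\<And>\<theta>. \<theta> \<in> - ball \<theta>0 R \<Longrightarrow> enn2real (\<integral>\<^sup>+ t \<in> ball \<theta>0 v. ennreal (q \<theta> t) \<partial>\<mu>) < \<delta>/2"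
    by blast
  show ?thesis
  proof (intro exI[of _ R] conjI ballI R(1))
    fix \<theta> assume th: "\<theta> \<in> - ball \<theta>0 R"
    let ?X = "(\<integral>\<^sup>+ t \<in> ball \<theta>0 v. ennreal (q \<theta> t) \<partial>\<mu>)"
    have Xle: "?X \<le> 1"
    proof -
      have "?X \<le> (\<integral>\<^sup>+ t. ennreal (q \<theta> t) \<partial>\<mu>)"
        by (intro nn_integral_mono) (auto simp: indicator_def)
      then show ?thesis using q_dens by simp
    qed
    have X: "?X < ennreal (\<delta>/2)"
    proof -
      have "?X = ennreal (enn2real ?X)" using Xle using ennreal_enn2real[of ?X] ennreal_one_less_top by (metis le_less_trans)
      also have "\<dots> < ennreal (\<delta>/2)" using R(2)[OF th] d by (subst ennreal_less_iff) auto
      finally show ?thesis .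
    qed
    have pw: "ennreal (B \<theta> t) \<le> ennreal (q \<theta> t) * indicator (ball \<theta>0 v) t + ennreal (\<delta>/2) * ennreal (q \<theta> t)" for t
    proof (cases "t \<in> ball \<theta>0 v")
      case True
      then have "ennreal (B \<theta> t) \<le> ennreal (q \<theta> t) * indicator (ball \<theta>0 v) t + 0"
        using B_le_q[of \<theta> t] by (simp add: ennreal_leI)
      also have "\<dots> \<le> ennreal (q \<theta> t) * indicator (ball \<theta>0 v) t + ennreal (\<delta>/2) * ennreal (q \<theta> t)"
        by (intro add_left_mono) simp
      finally show ?thesis .
    next
      case False
      have "B \<theta> t \<le> q \<theta> t * (real N * h t)" unfolding B_def by simp
      also have "\<dots> \<le> q \<theta> t * (real N * (\<delta> / (2 * real N)))"
        using hv[of t] False q_nonneg[of \<theta> t] N_pos by (intro mult_left_mono) auto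
      also have "\<dots> = (\<delta>/2) * q \<theta> t" using N_pos by (simp add: field_simps)
      finally have "ennreal (B \<theta> t) \<le> ennreal ((\<delta>/2) * q \<theta> t)" by (rule ennreal_leI)
      also have "ennreal ((\<delta>/2) * q \<theta> t) = ennreal (\<delta>/2) * ennreal (q \<theta> t)"
        using d q_nonneg[of \<theta> t] by (intro ennreal_mult) auto
      finally show ?thesis using False by simp
    qed
    have "A \<theta> \<le> (\<integral>\<^sup>+ t. ennreal (q \<theta> t) * indicator (ball \<theta>0 v) t + ennreal (\<delta>/2) * ennreal (q \<theta> t) \<partial>\<mu>)"
      unfolding A_def by (intro nn_integral_mono pw)
    also have "\<dots> = ?X + (\<integral>\<^sup>+ t. ennreal (\<delta>/2) * ennreal (q \<theta> t) \<partial>\<mu>)"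
      by (rule nn_integral_add) auto
    also have "\<dots> = ?X + ennreal (\<delta>/2) * (\<integral>\<^sup>+ t. ennreal (q \<theta> t) \<partial>\<mu>)"
      by (simp add: nn_integral_cmult)
    also have "\<dots> = ?X + ennreal (\<delta>/2)" using q_dens by simp
    also have "\<dots> < ennreal (\<delta>/2) + ennreal (\<delta>/2)"
      using X by (simp add: ennreal_add_left_cancel_less)
    also have "\<dots> = ennreal \<delta>" using d by (simp flip: ennreal_plus)
    finally show "A \<theta> < ennreal \<delta>" .
  qed
qed

lemma a_bound:
  "ennreal \<bar>\<integral> t. q \<theta> t * \<alpha> \<theta> t \<partial>\<mu>\<bar> \<le> A \<theta>"
proof (cases "integrable \<mu> (\<lambda>t. q \<theta> t * \<alpha> \<theta> t)")
  case True
  have "ennreal \<bar>\<integral> t. q \<theta> t * \<alpha> \<theta> t \<partial>\<mu>\<bar> \<le> (\<integral>\<^sup>+ t. norm (q \<theta> t * \<alpha> \<theta> t) \<partial>\<mu>)"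
    using integral_norm_bound_ennreal[OF True] by simp
  also have "\<dots> \<le> A \<theta>" unfolding A_def
    using qa_nonneg qa_le_B by (intro nn_integral_mono ennreal_leI) auto
  finally show ?thesis .
next
  case False
  then show ?thesis by (simp add: not_integrable_integral_eq)
qed

lemma K_bound:
  "ennreal \<bar>\<integral> t. q \<theta> t * \<alpha> \<theta> t * u t \<partial>\<mu>\<bar> \<le> (\<integral>\<^sup>+ t. ennreal (B \<theta> t * \<bar>u t\<bar>) \<partial>\<mu>)"
proof (cases "integrable \<mu> (\<lambda>t. q \<theta> t * \<alpha> \<theta> t * u t)")
  case True
  have "ennreal \<bar>\<integral> t. q \<theta> t * \<alpha> \<theta> t * u t \<partial>\<mu>\<bar> \<le> (\<integral>\<^sup>+ t. norm (q \<theta> t * \<alpha> \<theta> t * u t) \<partial>\<mu>)"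
    using integral_norm_bound_ennreal[OF True] by simp
  also have "\<dots> \<le> (\<integral>\<^sup>+ t. ennreal (B \<theta> t * \<bar>u t\<bar>) \<partial>\<mu>)"
  proof (intro nn_integral_mono ennreal_leI)
    fix t
    have n1: "norm (q \<theta> t * \<alpha> \<theta> t * u t) = \<bar>q \<theta> t * \<alpha> \<theta> t\<bar> * \<bar>u t\<bar>"
      by (metis abs_mult real_norm_def)
    have n2: "\<bar>q \<theta> t * \<alpha> \<theta> t\<bar> = q \<theta> t * \<alpha> \<theta> t"
      using qa_nonneg[of \<theta> t] by (rule abs_of_nonneg)
    have "norm (q \<theta> t * \<alpha> \<theta> t * u t) = (q \<theta> t * \<alpha> \<theta> t) * \<bar>u t\<bar>"
      using n1 n2 by simp
    also have "\<dots> \<le> B \<theta> t * \<bar>u t\<bar>" using qa_le_B by (intro mult_right_mono) auto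
    finally show "norm (q \<theta> t * \<alpha> \<theta> t * u t) \<le> B \<theta> t * \<bar>u t\<bar>" .
  qed
  finally show ?thesis .
next
  case False
  then show ?thesis by (simp add: not_integrable_integral_eq)
qed

lemma B_sec[measurable]: "B \<theta> \<in> borel_measurable \<mu>"
  using measurable_Pair2[OF B_meas, of \<theta>] by simp

lemma CS_bound:
  assumes um[measurable]: "u \<in> borel_measurable \<mu>"
  shows "(\<integral>\<^sup>+ t. ennreal (B \<theta> t * \<bar>u t\<bar>) \<partial>\<mu>)\<^sup>2 \<le> A \<theta> * (\<integral>\<^sup>+ t. ennreal (B \<theta> t * (u t)\<^sup>2) \<partial>\<mu>)"
proof -
  let ?F = "\<lambda>t. ennreal (sqrt (B \<theta> t))" and ?G = "\<lambda>t. ennreal (sqrt (B \<theta> t) * \<bar>u t\<bar>)"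
  have "(\<integral>\<^sup>+ t. ?F t * ?G t \<partial>\<mu>)\<^sup>2 \<le> (\<integral>\<^sup>+ t. ?F t ^ 2 \<partial>\<mu>) * (\<integral>\<^sup>+ t. ?G t ^ 2 \<partial>\<mu>)"
    by (rule Cauchy_Schwarz_nn_integral) auto
  moreover have "\<And>t. ?F t * ?G t = ennreal (B \<theta> t * \<bar>u t\<bar>)"
    using B_nonneg by (simp add: ennreal_mult[symmetric] mult.assoc[symmetric])
  moreover have "\<And>t. ?F t ^ 2 = ennreal (B \<theta> t)"
    using B_nonneg by (simp add: ennreal_power)
  moreover have "\<And>t. ?G t ^ 2 = ennreal (B \<theta> t * (u t)\<^sup>2)"
    using B_nonneg by (simp add: ennreal_power power_mult_distrib)
  ultimately show ?thesis by (simp add: A_def)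
qed

lemma ennreal_div_le:
  fixes x A Z :: ennreal
  assumes "x \<le> A * Z" "A \<noteq> \<infinity>"
  shows "x / A \<le> Z"
proof (cases "A = 0")
  case True then show ?thesis using assms by simp
next
  case False
  have "x / A \<le> (A * Z) / A" using assms(1) by (simp add: divide_right_mono_ennreal)
  also have "\<dots> = Z * A / A" by (simp only: mult.commute)
  also have "\<dots> = Z" by (rule ennreal_mult_divide_eq) (use False assms(2) in auto)
  finally show ?thesis .
qed

lemma pw_bound:
  assumes um[measurable]: "u \<in> borel_measurable \<mu>"
  shows "ennreal (((\<integral> t. q \<theta> t * \<alpha> \<theta> t * u t \<partial>\<mu>) - (\<integral> t. q \<theta> t * \<alpha> \<theta> t \<partial>\<mu>) * u \<theta>)\<^sup>2) / A \<theta>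
     \<le> 2 * (\<integral>\<^sup>+ t. ennreal (B \<theta> t * (u t)\<^sup>2) \<partial>\<mu>) + 2 * ennreal ((u \<theta>)\<^sup>2)"
proof -
  define K where "K = (\<integral> t. q \<theta> t * \<alpha> \<theta> t * u t \<partial>\<mu>)"
  define a where "a = (\<integral> t. q \<theta> t * \<alpha> \<theta> t \<partial>\<mu>)"
  define J where "J = (\<integral>\<^sup>+ t. ennreal (B \<theta> t * (u t)\<^sup>2) \<partial>\<mu>)"
  have K2: "ennreal (K\<^sup>2) \<le> A \<theta> * J"
  proof -
    have "ennreal (K\<^sup>2) = (ennreal \<bar>K\<bar>)\<^sup>2" by (simp add: ennreal_power)
    also have "\<dots> \<le> (\<integral>\<^sup>+ t. ennreal (B \<theta> t * \<bar>u t\<bar>) \<partial>\<mu>)\<^sup>2"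
      unfolding K_def by (intro power_mono K_bound) auto
    also have "\<dots> \<le> A \<theta> * J" unfolding J_def by (rule CS_bound[OF um])
    finally show ?thesis .
  qed
  have a2: "ennreal (a\<^sup>2) \<le> A \<theta>"
  proof -
    have "ennreal (a\<^sup>2) = (ennreal \<bar>a\<bar>)\<^sup>2" by (simp add: ennreal_power)
    also have "\<dots> \<le> (A \<theta>)\<^sup>2" unfolding a_def by (intro power_mono a_bound) auto
    also have "\<dots> \<le> A \<theta> * 1" unfolding power2_eq_square by (intro mult_left_mono A_le1) auto
    finally show ?thesis by simp
  qed
  have "2 * K\<^sup>2 + 2 * (a * u \<theta>)\<^sup>2 - (K - a * u \<theta>)\<^sup>2 = (K + a * u \<theta>)\<^sup>2"
    by (simp add: power2_eq_square algebra_simps)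
  then have "(K - a * u \<theta>)\<^sup>2 \<le> 2 * K\<^sup>2 + 2 * (a * u \<theta>)\<^sup>2"
    using zero_le_power2[of "K + a * u \<theta>"] by linarith
  then have "(K - a * u \<theta>)\<^sup>2 \<le> 2 * K\<^sup>2 + 2 * (a\<^sup>2 * (u \<theta>)\<^sup>2)"
    by (simp add: power_mult_distrib)
  then have "ennreal ((K - a * u \<theta>)\<^sup>2) \<le> ennreal (2 * K\<^sup>2 + 2 * (a\<^sup>2 * (u \<theta>)\<^sup>2))"
    by (rule ennreal_leI)
  also have "\<dots> = ennreal (2 * K\<^sup>2) + ennreal (2 * (a\<^sup>2 * (u \<theta>)\<^sup>2))"
    by (rule ennreal_plus) auto
  also have "\<dots> = 2 * ennreal (K\<^sup>2) + 2 * (ennreal (a\<^sup>2) * ennreal ((u \<theta>)\<^sup>2))"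
    by (simp only: ennreal_mult' ennreal_mult'' zero_le_power2 zero_le_numeral mult_nonneg_nonneg ennreal_numeral)
  also have "\<dots> \<le> 2 * (A \<theta> * J) + 2 * (A \<theta> * ennreal ((u \<theta>)\<^sup>2))"
    using K2 a2 by (intro add_mono mult_left_mono mult_right_mono) auto
  also have "\<dots> = A \<theta> * (2 * J + 2 * ennreal ((u \<theta>)\<^sup>2))"
    by (simp only: distrib_left mult.left_commute)
  finally have "ennreal ((K - a * u \<theta>)\<^sup>2) \<le> A \<theta> * (2 * J + 2 * ennreal ((u \<theta>)\<^sup>2))" .
  then have "ennreal ((K - a * u \<theta>)\<^sup>2) / A \<theta> \<le> 2 * J + 2 * ennreal ((u \<theta>)\<^sup>2)"
    by (rule ennreal_div_le) (rule A_fin)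
  then show ?thesis unfolding K_def a_def J_def .
qed

abbreviation "Hc \<equiv> Hconst \<mu> p \<nu> f y \<epsilon>"
definition "Hr = enn2real Hc"

lemma Hr_pos: "0 < Hr"
  unfolding Hr_def using H_pos H_fin by (simp add: enn2real_positive_iff)

lemma Hc_eq: "Hc = ennreal Hr"
  unfolding Hr_def using H_fin by simp

definition "dens \<theta> = p \<theta> * h \<theta> / Hr"

lemma dens_nonneg: "0 \<le> dens \<theta>"
  unfolding dens_def using p_nonneg h_nonneg Hr_pos by simp

lemma dens_meas[measurable]: "dens \<in> borel_measurable \<mu>"
  unfolding dens_def by measurable

abbreviation "\<pi> \<equiv> post \<mu> p \<nu> f y \<epsilon>"

lemma post_eq: "\<pi> = density \<mu> (\<lambda>\<theta>. ennreal (dens \<theta>))"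
  by (simp add: post_def dens_def Hr_def)

lemma sets_post: "sets \<pi> = sets \<mu>"
  by (simp add: post_eq)

lemma space_post[simp]: "space \<pi> = UNIV"
  by (simp add: post_eq)

lemma meas_post: "measurable \<pi> M = measurable \<mu> M"
  by (rule measurable_cong_sets[OF sets_post refl])

lemma post_total: "emeasure \<pi> UNIV = 1"
proof -
  have "emeasure \<pi> UNIV = (\<integral>\<^sup>+ \<theta>. ennreal (dens \<theta>) * indicator UNIV \<theta> \<partial>\<mu>)"
    unfolding post_eq by (rule emeasure_density) (auto simp: sets_mu)
  also have "\<dots> = (\<integral>\<^sup>+ \<theta>. ennreal (p \<theta> * h \<theta>) * ennreal (1 / Hr) \<partial>\<mu>)"
    unfolding dens_def using Hr_pos
    by (intro nn_integral_cong) (simp add: ennreal_mult''[symmetric])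
  also have "\<dots> = Hc * ennreal (1 / Hr)"
    by (subst nn_integral_multc) (auto simp: Hconst_def)
  also have "\<dots> = 1" using Hr_pos by (simp add: Hc_eq ennreal_mult[symmetric])
  finally show ?thesis .
qed

lemma post_prob: "prob_space \<pi>"
  by (rule prob_spaceI) (simp add: post_total)

lemma dens_B: "dens \<theta> * B \<theta> t \<le> real N * dens t * q t \<theta>"
proof (cases "p \<theta> = 0")
  case True
  then have "dens \<theta> = 0" by (simp add: dens_def)
  moreover have "0 \<le> real N * dens t * q t \<theta>" using dens_nonneg q_nonneg by simp
  ultimately show ?thesis by simp
next
  case False
  then have pp: "0 < p \<theta>" using p_nonneg[of \<theta>] by simp
  have "dens \<theta> * B \<theta> t \<le> dens \<theta> * (real N * p t * q t \<theta> * h t / p \<theta>)"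
    using dens_nonneg[of \<theta>] by (intro mult_left_mono) (auto simp: B_def)
  also have "\<dots> = h \<theta> * (real N * dens t * q t \<theta>)"
    using pp Hr_pos by (simp add: dens_def field_simps)
  also have "\<dots> \<le> 1 * (real N * dens t * q t \<theta>)"
    using h_le1 dens_nonneg q_nonneg by (intro mult_right_mono) auto
  finally show ?thesis by simp
qed

lemma J_meas[measurable]:
  assumes [measurable]: "u \<in> borel_measurable \<mu>"
  shows "(\<lambda>\<theta>. \<integral>\<^sup>+ t. ennreal (B \<theta> t * (u t)\<^sup>2) \<partial>\<mu>) \<in> borel_measurable \<mu>"
proof -
  interpret mu: sigma_finite_measure \<mu> by (rule sf_mu)
  show ?thesis by measurable
qed

lemma J_int:
  assumes um[measurable]: "u \<in> borel_measurable \<mu>"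
  shows "(\<integral>\<^sup>+ \<theta>. (\<integral>\<^sup>+ t. ennreal (B \<theta> t * (u t)\<^sup>2) \<partial>\<mu>) \<partial>\<pi>)
        \<le> ennreal (real N) * (\<integral>\<^sup>+ t. ennreal ((u t)\<^sup>2) \<partial>\<pi>)"
proof -
  interpret pf: pair_sigma_finite \<mu> \<mu> by (intro pair_sigma_finite.intro sf_mu)
  have "(\<integral>\<^sup>+ \<theta>. (\<integral>\<^sup>+ t. ennreal (B \<theta> t * (u t)\<^sup>2) \<partial>\<mu>) \<partial>\<pi>)
      = (\<integral>\<^sup>+ \<theta>. ennreal (dens \<theta>) * (\<integral>\<^sup>+ t. ennreal (B \<theta> t * (u t)\<^sup>2) \<partial>\<mu>) \<partial>\<mu>)"
    unfolding post_eq by (rule nn_integral_density) (auto intro: J_meas)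
  also have "\<dots> = (\<integral>\<^sup>+ \<theta>. (\<integral>\<^sup>+ t. ennreal (dens \<theta>) * ennreal (B \<theta> t * (u t)\<^sup>2) \<partial>\<mu>) \<partial>\<mu>)"
    by (intro nn_integral_cong nn_integral_cmult[symmetric]) auto
  also have "\<dots> \<le> (\<integral>\<^sup>+ \<theta>. (\<integral>\<^sup>+ t. ennreal (real N * dens t * q t \<theta> * (u t)\<^sup>2) \<partial>\<mu>) \<partial>\<mu>)"
  proof (intro nn_integral_mono)
    fix \<theta> t
    have "ennreal (dens \<theta>) * ennreal (B \<theta> t * (u t)\<^sup>2) = ennreal ((dens \<theta> * B \<theta> t) * (u t)\<^sup>2)"
      using dens_nonneg by (simp add: ennreal_mult' mult.assoc)
    also have "\<dots> \<le> ennreal (real N * dens t * q t \<theta> * (u t)\<^sup>2)"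
      using dens_B by (intro ennreal_leI mult_right_mono) auto
    finally show "ennreal (dens \<theta>) * ennreal (B \<theta> t * (u t)\<^sup>2) \<le> ennreal (real N * dens t * q t \<theta> * (u t)\<^sup>2)" .
  qed
  also have "\<dots> = (\<integral>\<^sup>+ t. (\<integral>\<^sup>+ \<theta>. ennreal (real N * dens t * q t \<theta> * (u t)\<^sup>2) \<partial>\<mu>) \<partial>\<mu>)"
    by (rule pf.Fubini'[where f="\<lambda>t \<theta>. ennreal (real N * dens t * q t \<theta> * (u t)\<^sup>2)"]) measurable
  also have "\<dots> = (\<integral>\<^sup>+ t. ennreal (real N * dens t * (u t)\<^sup>2) * (\<integral>\<^sup>+ \<theta>. ennreal (q t \<theta>) \<partial>\<mu>) \<partial>\<mu>)"
  proof (intro nn_integral_cong)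
    fix t
    have "(\<integral>\<^sup>+ \<theta>. ennreal (real N * dens t * q t \<theta> * (u t)\<^sup>2) \<partial>\<mu>)
        = (\<integral>\<^sup>+ \<theta>. ennreal (real N * dens t * (u t)\<^sup>2) * ennreal (q t \<theta>) \<partial>\<mu>)"
    proof (intro nn_integral_cong)
      fix \<theta>
      show "ennreal (real N * dens t * q t \<theta> * (u t)\<^sup>2) = ennreal (real N * dens t * (u t)\<^sup>2) * ennreal (q t \<theta>)"
        by (subst ennreal_mult''[symmetric]) (simp_all add: q_nonneg mult_ac)
    qed
    also have "\<dots> = ennreal (real N * dens t * (u t)\<^sup>2) * (\<integral>\<^sup>+ \<theta>. ennreal (q t \<theta>) \<partial>\<mu>)"
      by (rule nn_integral_cmult) measurable
    finally show "(\<integral>\<^sup>+ \<theta>. ennreal (real N * dens t * q t \<theta> * (u t)\<^sup>2) \<partial>\<mu>)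
        = ennreal (real N * dens t * (u t)\<^sup>2) * (\<integral>\<^sup>+ \<theta>. ennreal (q t \<theta>) \<partial>\<mu>)" .
  qed
  also have "\<dots> = (\<integral>\<^sup>+ t. ennreal (real N) * (ennreal (dens t) * ennreal ((u t)\<^sup>2)) \<partial>\<mu>)"
    using dens_nonneg q_dens by (intro nn_integral_cong) (simp add: ennreal_mult' mult.assoc)
  also have "\<dots> = ennreal (real N) * (\<integral>\<^sup>+ t. ennreal (dens t) * ennreal ((u t)\<^sup>2) \<partial>\<mu>)"
    by (rule nn_integral_cmult) measurable
  also have "(\<integral>\<^sup>+ t. ennreal (dens t) * ennreal ((u t)\<^sup>2) \<partial>\<mu>) = (\<integral>\<^sup>+ t. ennreal ((u t)\<^sup>2) \<partial>\<pi>)"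
    unfolding post_eq by (rule nn_integral_density[symmetric]) auto
  finally show ?thesis .
qed

lemma range_bound:
  assumes uL: "u \<in> L2_0 \<pi>"
    and eq: "AE \<theta> in \<pi>. P2N_op \<mu> \<nu> f p q y \<epsilon> N u \<theta> - 1 * u \<theta> = g \<theta>"
  shows "(\<integral>\<^sup>+ \<theta>. ennreal ((g \<theta>)\<^sup>2) / A \<theta> \<partial>\<pi>) < \<infinity>"
proof -
  have um[measurable]: "u \<in> borel_measurable \<mu>" using uL by (simp add: L2_0_def meas_post)
  have "integrable \<pi> (\<lambda>x. (u x)\<^sup>2)" using uL by (simp add: L2_0_def)
  then have u2: "(\<integral>\<^sup>+ t. ennreal ((u t)\<^sup>2) \<partial>\<pi>) < \<infinity>"
    using integrableD(2) by (auto simp: less_top)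
  let ?J = "\<lambda>\<theta>. \<integral>\<^sup>+ t. ennreal (B \<theta> t * (u t)\<^sup>2) \<partial>\<mu>"
  have Jm: "?J \<in> borel_measurable \<pi>" unfolding meas_post by (rule J_meas[OF um])
  have um': "(\<lambda>t. ennreal ((u t)\<^sup>2)) \<in> borel_measurable \<pi>" unfolding meas_post by measurable
  have "(\<integral>\<^sup>+ \<theta>. ennreal ((g \<theta>)\<^sup>2) / A \<theta> \<partial>\<pi>) \<le> (\<integral>\<^sup>+ \<theta>. 2 * ?J \<theta> + 2 * ennreal ((u \<theta>)\<^sup>2) \<partial>\<pi>)"
  proof (rule nn_integral_mono_AE)
    show "AE \<theta> in \<pi>. ennreal ((g \<theta>)\<^sup>2) / A \<theta> \<le> 2 * ?J \<theta> + 2 * ennreal ((u \<theta>)\<^sup>2)"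
      using eq
    proof (rule AE_mp, intro AE_I2 impI)
      fix \<theta> assume e: "P2N_op \<mu> \<nu> f p q y \<epsilon> N u \<theta> - 1 * u \<theta> = g \<theta>"
      have "g \<theta> = (\<integral> t. q \<theta> t * \<alpha> \<theta> t * u t \<partial>\<mu>) - (\<integral> t. q \<theta> t * \<alpha> \<theta> t \<partial>\<mu>) * u \<theta>"
        using e[symmetric] by (simp add: P2N_op_def mh_op_def algebra_simps)
      then show "ennreal ((g \<theta>)\<^sup>2) / A \<theta> \<le> 2 * ?J \<theta> + 2 * ennreal ((u \<theta>)\<^sup>2)"
        using pw_bound[OF um, of \<theta>] by simp
    qed
  qed
  also have "\<dots> = 2 * (\<integral>\<^sup>+ \<theta>. ?J \<theta> \<partial>\<pi>) + 2 * (\<integral>\<^sup>+ \<theta>. ennreal ((u \<theta>)\<^sup>2) \<partial>\<pi>)"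
    using Jm um' by (simp add: nn_integral_add nn_integral_cmult)
  also have "\<dots> \<le> 2 * (ennreal (real N) * (\<integral>\<^sup>+ t. ennreal ((u t)\<^sup>2) \<partial>\<pi>)) + 2 * (\<integral>\<^sup>+ \<theta>. ennreal ((u \<theta>)\<^sup>2) \<partial>\<pi>)"
    using J_int[OF um] by (intro add_mono mult_left_mono) auto
  also have "\<dots> < \<infinity>"
    using u2 by (simp add: ennreal_mult_less_top)
  finally show ?thesis .
qed

lemma ball_post[measurable]: "ball \<theta>0 r \<in> sets \<pi>"
  by (simp add: sets_post)

lemma annulus: "R > 0 \<Longrightarrow> \<exists>R'>R. emeasure \<pi> (ball \<theta>0 R' - ball \<theta>0 R) > 0"
proof (rule ccontr)
  assume R: "R > 0" and c: "\<not> (\<exists>R'>R. emeasure \<pi> (ball \<theta>0 R' - ball \<theta>0 R) > 0)"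
  let ?N = "\<lambda>n::nat. ball \<theta>0 (R + real n + 1) - ball \<theta>0 R"
  have z: "emeasure \<pi> (?N n) = 0" for n
  proof -
    have "R + real n + 1 > R" by simp
    then show ?thesis using c by (meson not_gr_zero)
  qed
  have "emeasure \<pi> (\<Union>n. ?N n) = 0"
    by (rule emeasure_UN_eq_0) (use z in auto)
  moreover have "(\<Union>n. ?N n) = - ball \<theta>0 R"
  proof safe
    fix x assume "x \<notin> ball \<theta>0 R"
    obtain n :: nat where "dist \<theta>0 x < real n" using reals_Archimedean2 by blast
    then have "x \<in> ?N n" using \<open>x \<notin> ball \<theta>0 R\<close> R by auto
    then show "x \<in> (\<Union>n. ?N n)" by blast
  qed
  ultimately show False using pi_tails[OF R] by simp
qed

lemma core_ball: "\<exists>R0>0. emeasure \<pi> (ball \<theta>0 R0) > 0"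
proof (rule ccontr)
  assume c: "\<not> (\<exists>R0>0. emeasure \<pi> (ball \<theta>0 R0) > 0)"
  let ?N = "\<lambda>n::nat. ball \<theta>0 (real n + 1)"
  have z: "emeasure \<pi> (?N n) = 0" for n
  proof -
    have "real n + 1 > 0" by simp
    then show ?thesis using c by (meson not_gr_zero)
  qed
  have "emeasure \<pi> (\<Union>n. ?N n) = 0"
    by (rule emeasure_UN_eq_0) (use z in auto)
  moreover have "(\<Union>n. ?N n) = UNIV"
  proof safe
    fix x
    obtain n :: nat where "dist \<theta>0 x < real n" using reals_Archimedean2 by blast
    then have "x \<in> ?N n" by auto
    then show "x \<in> (\<Union>n. ?N n)" by blast
  qed auto
  ultimately show False using post_total by simp
qed

lemma seq_sets: "\<exists>R0 E. R0 > 0 \<and> emeasure \<pi> (ball \<theta>0 R0) > 0 \<and> (\<forall>k. E k \<in> sets \<mu>)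
   \<and> (\<forall>k. emeasure \<pi> (E k) > 0) \<and> (\<forall>k. E k \<inter> ball \<theta>0 R0 = {}) \<and> disjoint_family E
   \<and> (\<forall>k. \<forall>\<theta>\<in>E k. A \<theta> < ennreal ((1/2)^k))"
proof -
  obtain R0 where R0: "R0 > 0" "emeasure \<pi> (ball \<theta>0 R0) > 0" using core_ball by blast
  have "\<forall>k. \<exists>R>0. \<forall>\<theta>\<in>- ball \<theta>0 R. A \<theta> < ennreal ((1/2)^k)"
    using A_tails by simp
  then obtain T where T: "\<And>k. T k > 0" "\<And>k \<theta>. \<theta> \<in> - ball \<theta>0 (T k) \<Longrightarrow> A \<theta> < ennreal ((1/2)^k)"
    by metis
  have "\<forall>R. \<exists>R'. R > 0 \<longrightarrow> R' > R \<and> emeasure \<pi> (ball \<theta>0 R' - ball \<theta>0 R) > 0"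
    using annulus by blast
  then obtain NX where NX: "\<And>R. R > 0 \<Longrightarrow> NX R > R \<and> emeasure \<pi> (ball \<theta>0 (NX R) - ball \<theta>0 R) > 0"
    by metis
  define rad where "rad = rec_nat R0 (\<lambda>k r. NX (max r (T k)))"
  have rad0: "rad 0 = R0" by (simp add: rad_def)
  have radS: "rad (Suc k) = NX (max (rad k) (T k))" for k by (simp add: rad_def)
  have rad_pos: "rad k > 0" for k
  proof (induction k)
    case 0 then show ?case using R0 rad0 by simp
  next
    case (Suc k)
    then have "max (rad k) (T k) > 0" by simp
    then show ?case using NX[of "max (rad k) (T k)"] radS[of k] by (simp add: max_def split: if_splits)
  qed
  have radS_gt: "rad (Suc k) > max (rad k) (T k)" for k
    using NX[of "max (rad k) (T k)"] radS[of k] rad_pos[of k] by simp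
  have rad_mono: "rad j \<le> rad k" if "j \<le> k" for j k
    using that
  proof (induction k)
    case 0 then show ?case by simp
  next
    case (Suc k)
    then show ?case using radS_gt[of k] by (cases "j = Suc k") (auto simp: le_Suc_eq)
  qed
  define E where "E k = ball \<theta>0 (rad (Suc k)) - ball \<theta>0 (max (rad k) (T k))" for k
  show ?thesis
  proof (intro exI[of _ R0] exI[of _ E] conjI allI ballI R0)
    fix k
    show "E k \<in> sets \<mu>" unfolding E_def by simp
    show "emeasure \<pi> (E k) > 0"
      unfolding E_def using NX[of "max (rad k) (T k)"] radS[of k] rad_pos[of k] by simp
    show "E k \<inter> ball \<theta>0 R0 = {}"
      using rad_mono[of 0 k] rad0 unfolding E_def by auto
  next
    fix k \<theta> assume "\<theta> \<in> E k"
    then have "\<theta> \<in> - ball \<theta>0 (T k)" unfolding E_def by auto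
    then show "A \<theta> < ennreal ((1/2)^k)" by (rule T(2))
  next
    show "disjoint_family E"
    unfolding disjoint_family_on_def
    proof (intro ballI impI)
      fix j k :: nat assume "j \<noteq> k"
      then have "j < k \<or> k < j" by auto
      moreover have "E j \<inter> E k = {}" if "j < k" for j k
      proof -
        have "rad (Suc j) \<le> rad k" using that by (intro rad_mono) simp
        then show ?thesis unfolding E_def by auto
      qed
      ultimately show "E j \<inter> E k = {}" by blast
    qed
  qed
qed

lemma div_ge:
  fixes Av :: ennreal and sv xv :: real
  assumes s: "0 < s" and As: "Av \<le> ennreal s" and x: "0 < x" and At: "Av \<noteq> top"
  shows "ennreal (x / s) \<le> ennreal x / Av"
proof (cases "Av = 0")
  case True then show ?thesis using x by simp
next
  case False
  show ?thesis
  proof (rule ccontr)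
    assume "\<not> ennreal (x / s) \<le> ennreal x / Av"
    then have "ennreal x / Av < ennreal (x / s)" by simp
    then have "ennreal x < ennreal (x / s) * Av"
      using divide_less_ennreal[of Av "ennreal x" "ennreal (x / s)"] False At by (simp add: less_top)
    also have "\<dots> \<le> ennreal (x / s) * ennreal s" using As by (intro mult_left_mono) auto
    also have "\<dots> = ennreal x" using s x by (simp add: ennreal_mult[symmetric])
    finally show False by simp
  qed
qed

lemma suminf_one_top: "(\<Sum>k::nat. (1::ennreal)) = top"
proof -
  have "of_nat n \<le> (\<Sum>k::nat. (1::ennreal))" for n
    using sum_le_suminf[OF summableI, of "{..<n}" "\<lambda>_. (1::ennreal)"] by simp
  then have "(SUP n. of_nat n :: ennreal) \<le> (\<Sum>k::nat. (1::ennreal))" by (intro SUP_least) auto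
  then show ?thesis by (simp add: ennreal_SUP_of_nat_eq_top top_unique)
qed

lemma sq_bound: "(a - b)\<^sup>2 \<le> 2 * a\<^sup>2 + 2 * (b::real)\<^sup>2"
proof -
  have "2 * a\<^sup>2 + 2 * b\<^sup>2 - (a - b)\<^sup>2 = (a + b)\<^sup>2" by (simp add: power2_eq_square algebra_simps)
  then show ?thesis using zero_le_power2[of "a + b"] by linarith
qed

lemma le_1_sq: "(x::real) \<le> 1 + x\<^sup>2"
proof -
  have "1 + x\<^sup>2 - x = (x - 1/2)\<^sup>2 + 3/4" by (simp add: power2_eq_square field_simps)
  then show ?thesis using zero_le_power2[of "x - 1/2"] by linarith
qed

lemma single_sum:
  fixes F :: "nat \<Rightarrow> 'c::{t2_space, topological_comm_monoid_add, semiring_1}"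
  assumes "disjoint_family E" "\<theta> \<in> E k"
  shows "(\<Sum>i. F i * indicator (E i) \<theta>) = F k"
proof -
  have "(\<lambda>i. F i * indicator (E i) \<theta>) = (\<lambda>i. if i = k then F i else 0)"
    using assms by (auto simp: disjoint_family_on_def indicator_def fun_eq_iff)
  then show ?thesis using sums_unique[OF sums_single[of k F]] by simp
qed

lemma zero_sum:
  fixes F :: "nat \<Rightarrow> 'c::{t2_space, topological_comm_monoid_add, semiring_1}"
  assumes "\<And>k. \<theta> \<notin> E k"
  shows "(\<Sum>i. F i * indicator (E i) \<theta>) = 0"
  using assms by simp

lemma exists_bad_g: "\<exists>g\<in>L2_0 \<pi>. (\<integral>\<^sup>+ \<theta>. ennreal ((g \<theta>)\<^sup>2) / A \<theta> \<partial>\<pi>) = \<infinity>"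
proof -
  interpret P: prob_space \<pi> by (rule post_prob)
  obtain R0 E where R0: "R0 > 0" "emeasure \<pi> (ball \<theta>0 R0) > 0"
    and Es: "\<And>k. E k \<in> sets \<mu>" and Epos: "\<And>k. emeasure \<pi> (E k) > 0"
    and EF: "\<And>k. E k \<inter> ball \<theta>0 R0 = {}" and disj: "disjoint_family E"
    and EA: "\<And>k \<theta>. \<theta> \<in> E k \<Longrightarrow> A \<theta> < ennreal ((1/2)^k)"
    using seq_sets by metis
  have Em[measurable]: "E k \<in> sets \<pi>" for k using Es sets_post by simp
  define e where "e k = measure \<pi> (E k)" for k
  have eE: "emeasure \<pi> (E k) = ennreal (e k)" for k by (simp add: e_def P.emeasure_eq_measure)
  have epos: "e k > 0" for k using Epos[of k] eE[of k] by simp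
  define s where "s k = (1/2::real)^k" for k
  have spos: "s k > 0" for k by (simp add: s_def)
  define c where "c k = sqrt (s k / e k)" for k
  have c2: "(c k)\<^sup>2 = s k / e k" for k using spos[of k] epos[of k] by (simp add: c_def)
  have cpos: "c k > 0" for k using spos[of k] epos[of k] by (simp add: c_def)
  define u where "u \<theta> = (\<Sum>k. c k * indicator (E k) \<theta>)" for \<theta>
  have u_in: "u \<theta> = c k" if "\<theta> \<in> E k" for \<theta> k
    unfolding u_def by (rule single_sum[OF disj that])
  have u_out: "u \<theta> = 0" if "\<And>k. \<theta> \<notin> E k" for \<theta>
    unfolding u_def using that by simp
  have um[measurable]: "u \<in> borel_measurable \<pi>" unfolding u_def by measurable
  have u_nonneg: "0 \<le> u \<theta>" for \<theta>
    using u_in u_out cpos by (cases "\<exists>k. \<theta> \<in> E k") (auto intro: less_imp_le)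
  have u2sum: "ennreal ((u \<theta>)\<^sup>2) = (\<Sum>k. ennreal ((c k)\<^sup>2) * indicator (E k) \<theta>)" for \<theta>
  proof (cases "\<exists>k. \<theta> \<in> E k")
    case True
    then obtain k where k: "\<theta> \<in> E k" by blast
    show ?thesis using single_sum[OF disj k, of "\<lambda>k. ennreal ((c k)\<^sup>2)"] u_in[OF k] by simp
  next
    case False
    then show ?thesis using u_out[of \<theta>] by simp
  qed
  have "(\<integral>\<^sup>+ \<theta>. ennreal ((u \<theta>)\<^sup>2) \<partial>\<pi>) = (\<integral>\<^sup>+ \<theta>. (\<Sum>k. ennreal ((c k)\<^sup>2) * indicator (E k) \<theta>) \<partial>\<pi>)"
    by (simp add: u2sum)
  also have "\<dots> = (\<Sum>k. \<integral>\<^sup>+ \<theta>. ennreal ((c k)\<^sup>2) * indicator (E k) \<theta> \<partial>\<pi>)"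
    by (rule nn_integral_suminf) measurable
  also have "\<dots> = (\<Sum>k. ennreal (s k))"
  proof (intro suminf_cong)
    fix k
    have "(\<integral>\<^sup>+ \<theta>. ennreal ((c k)\<^sup>2) * indicator (E k) \<theta> \<partial>\<pi>) = ennreal ((c k)\<^sup>2) * ennreal (e k)"
      using nn_integral_cmult_indicator[OF Em[of k], of "ennreal ((c k)\<^sup>2)"] eE by simp
    also have "\<dots> = ennreal ((c k)\<^sup>2 * e k)" by (rule ennreal_mult'[symmetric]) simp
    also have "(c k)\<^sup>2 * e k = s k" using c2[of k] epos[of k] by simp
    finally show "(\<integral>\<^sup>+ \<theta>. ennreal ((c k)\<^sup>2) * indicator (E k) \<theta> \<partial>\<pi>) = ennreal (s k)" .
  qed
  also have "\<dots> = ennreal (\<Sum>k. s k)"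
    by (rule suminf_ennreal2) (use spos in \<open>auto simp: s_def intro: less_imp_le\<close>)
  finally have u2int: "(\<integral>\<^sup>+ \<theta>. ennreal ((u \<theta>)\<^sup>2) \<partial>\<pi>) < \<infinity>" by simp
  have u2i: "integrable \<pi> (\<lambda>\<theta>. (u \<theta>)\<^sup>2)"
    by (rule integrableI_nonneg) (use u2int in auto)
  have ui: "integrable \<pi> u"
  proof (rule Bochner_Integration.integrable_bound[of _ "\<lambda>\<theta>. 1 + (u \<theta>)\<^sup>2"])
    show "integrable \<pi> (\<lambda>\<theta>. 1 + (u \<theta>)\<^sup>2)" using u2i by simp
    show "AE x in \<pi>. norm (u x) \<le> norm (1 + (u x)\<^sup>2)"
      using u_nonneg le_1_sq by (intro AE_I2) (simp add: add_nonneg_nonneg)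
  qed simp
  define F where "F = ball \<theta>0 R0"
  have Fm[measurable]: "F \<in> sets \<pi>" by (simp add: F_def)
  define mF where "mF = measure \<pi> F"
  have mFpos: "mF > 0" using R0(2) by (simp add: mF_def F_def P.emeasure_eq_measure)
  define m where "m = integral\<^sup>L \<pi> u"
  define g where "g \<theta> = u \<theta> - (m / mF) * indicator F \<theta>" for \<theta>
  have gm[measurable]: "g \<in> borel_measurable \<pi>" unfolding g_def by measurable
  have gL: "g \<in> L2_0 \<pi>"
    unfolding L2_0_def
  proof (intro CollectI conjI gm)
    show "integrable \<pi> (\<lambda>x. (g x)\<^sup>2)"
    proof (rule Bochner_Integration.integrable_bound[of _ "\<lambda>\<theta>. 2 * (u \<theta>)\<^sup>2 + 2 * (m / mF)\<^sup>2"])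
      show "integrable \<pi> (\<lambda>\<theta>. 2 * (u \<theta>)\<^sup>2 + 2 * (m / mF)\<^sup>2)" using u2i by simp
      show "AE x in \<pi>. norm ((g x)\<^sup>2) \<le> norm (2 * (u x)\<^sup>2 + 2 * (m / mF)\<^sup>2)"
      proof (intro AE_I2)
        fix x
        have "(g x)\<^sup>2 \<le> 2 * (u x)\<^sup>2 + 2 * ((m / mF) * indicator F x)\<^sup>2"
          unfolding g_def by (rule sq_bound)
        also have "((m / mF) * indicator F x)\<^sup>2 \<le> (m / mF)\<^sup>2"
          by (simp add: indicator_def power_mult_distrib)
        finally show "norm ((g x)\<^sup>2) \<le> norm (2 * (u x)\<^sup>2 + 2 * (m / mF)\<^sup>2)" by simp
      qed
    qed simp
    have "integral\<^sup>L \<pi> g = integral\<^sup>L \<pi> u - integral\<^sup>L \<pi> (\<lambda>\<theta>. (m / mF) * indicator F \<theta>)"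
      unfolding g_def
    proof (rule Bochner_Integration.integral_diff[OF ui])
      show "integrable \<pi> (\<lambda>\<theta>. (m / mF) * indicator F \<theta>)"
        by (intro integrable_mult_right integrable_real_indicator) (auto simp: P.emeasure_eq_measure)
    qed
    also have "\<dots> = m - (m / mF) * mF" by (simp add: m_def mF_def)
    also have "\<dots> = 0" using mFpos by simp
    finally show "integral\<^sup>L \<pi> g = 0" .
  qed
  have "(\<integral>\<^sup>+ \<theta>. (\<Sum>k. ennreal (1 / e k) * indicator (E k) \<theta>) \<partial>\<pi>) \<le> (\<integral>\<^sup>+ \<theta>. ennreal ((g \<theta>)\<^sup>2) / A \<theta> \<partial>\<pi>)"
  proof (intro nn_integral_mono)
    fix \<theta>
    show "(\<Sum>k. ennreal (1 / e k) * indicator (E k) \<theta>) \<le> ennreal ((g \<theta>)\<^sup>2) / A \<theta>"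
    proof (cases "\<exists>k. \<theta> \<in> E k")
      case True
      then obtain k where k: "\<theta> \<in> E k" by blast
      have "\<theta> \<notin> F" using EF[of k] k by (auto simp: F_def)
      then have gk: "g \<theta> = c k" using u_in[OF k] by (simp add: g_def)
      have "(\<Sum>k. ennreal (1 / e k) * indicator (E k) \<theta>) = ennreal (1 / e k)"
        by (rule single_sum[OF disj k])
      also have "1 / e k = (c k)\<^sup>2 / s k" using c2[of k] spos[of k] epos[of k] by simp
      also have "ennreal ((c k)\<^sup>2 / s k) \<le> ennreal ((c k)\<^sup>2) / A \<theta>"
      proof (rule div_ge)
        show "0 < s k" by (rule spos)
        show "A \<theta> \<le> ennreal (s k)" using EA[OF k] by (simp add: s_def)
        show "0 < (c k)\<^sup>2" using cpos[of k] by simp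
        show "A \<theta> \<noteq> top" using A_fin by simp
      qed
      finally show ?thesis using gk by simp
    next
      case False
      then show ?thesis by simp
    qed
  qed
  moreover have "(\<integral>\<^sup>+ \<theta>. (\<Sum>k. ennreal (1 / e k) * indicator (E k) \<theta>) \<partial>\<pi>) = (\<Sum>k. (1::ennreal))"
  proof -
    have "(\<integral>\<^sup>+ \<theta>. (\<Sum>k. ennreal (1 / e k) * indicator (E k) \<theta>) \<partial>\<pi>)
        = (\<Sum>k. \<integral>\<^sup>+ \<theta>. ennreal (1 / e k) * indicator (E k) \<theta> \<partial>\<pi>)"
      by (rule nn_integral_suminf) measurable
    also have "\<dots> = (\<Sum>k. (1::ennreal))"
    proof (intro suminf_cong)
      fix k
      have "(\<integral>\<^sup>+ \<theta>. ennreal (1 / e k) * indicator (E k) \<theta> \<partial>\<pi>) = ennreal (1 / e k) * ennreal (e k)"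
        using nn_integral_cmult_indicator[OF Em[of k], of "ennreal (1 / e k)"] eE by simp
      also have "\<dots> = 1" using epos[of k] by (simp add: ennreal_mult[symmetric])
      finally show "(\<integral>\<^sup>+ \<theta>. ennreal (1 / e k) * indicator (E k) \<theta> \<partial>\<pi>) = 1" .
    qed
    finally show ?thesis .
  qed
  ultimately have "(\<integral>\<^sup>+ \<theta>. ennreal ((g \<theta>)\<^sup>2) / A \<theta> \<partial>\<pi>) = \<infinity>"
    using suminf_one_top by (simp add: top_unique)
  then show ?thesis using gL by blast
qed

lemma main: "\<not> variance_bounding \<pi> (P2N_op \<mu> \<nu> f p q y \<epsilon> N)"
proof -
  have one: "1 \<in> spectrum0 \<pi> (P2N_op \<mu> \<nu> f p q y \<epsilon> N)"
    unfolding spectrum0_def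
  proof (intro CollectI notI)
    assume H: "(\<forall>g\<in>L2_0 \<pi>. \<exists>fa\<in>L2_0 \<pi>. AE x in \<pi>. P2N_op \<mu> \<nu> f p q y \<epsilon> N fa x - 1 * fa x = g x) \<and>
        (\<forall>fa\<in>L2_0 \<pi>. (AE x in \<pi>. P2N_op \<mu> \<nu> f p q y \<epsilon> N fa x = 1 * fa x) \<longrightarrow> (AE x in \<pi>. fa x = 0))"
    obtain g where g: "g \<in> L2_0 \<pi>" "(\<integral>\<^sup>+ \<theta>. ennreal ((g \<theta>)\<^sup>2) / A \<theta> \<partial>\<pi>) = \<infinity>"
      using exists_bad_g by blast
    obtain u where u: "u \<in> L2_0 \<pi>" "AE x in \<pi>. P2N_op \<mu> \<nu> f p q y \<epsilon> N u x - 1 * u x = g x"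
      using H g(1) by blast
    have "(\<integral>\<^sup>+ \<theta>. ennreal ((g \<theta>)\<^sup>2) / A \<theta> \<partial>\<pi>) < \<infinity>" by (rule range_bound[OF u])
    then show False using g(2) by simp
  qed
  show ?thesis
    unfolding variance_bounding_def using one by force
qed

end

theorem proposition4:
  fixes \<mu> :: "'a::metric_space measure" and \<nu> :: "'b::metric_space measure"
    and p :: "'a \<Rightarrow> real" and f :: "'a \<Rightarrow> 'b \<Rightarrow> real" and q :: "'a \<Rightarrow> 'a \<Rightarrow> real"
    and y :: 'b and \<epsilon> :: real and \<theta>0 :: 'a and N :: nat
  assumes sets_mu: "sets \<mu> = sets borel" and sf_mu: "sigma_finite_measure \<mu>"
    and sets_nu: "sets \<nu> = sets borel" and sf_nu: "sigma_finite_measure \<nu>"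
    and eps: "\<epsilon> > 0"
    and p_meas: "p \<in> borel_measurable \<mu>" and p_nonneg: "\<And>\<theta>. p \<theta> \<ge> 0"
    and f_meas: "(\<lambda>(\<theta>, x). f \<theta> x) \<in> borel_measurable (\<mu> \<Otimes>\<^sub>M \<nu>)"
    and f_nonneg: "\<And>\<theta> x. f \<theta> x \<ge> 0"
    and f_dens: "\<And>\<theta>. (\<integral>\<^sup>+ x. ennreal (f \<theta> x) \<partial>\<nu>) = 1"
    and q_meas: "(\<lambda>(\<theta>, t). q \<theta> t) \<in> borel_measurable (\<mu> \<Otimes>\<^sub>M \<mu>)"
    and q_nonneg: "\<And>\<theta> t. q \<theta> t \<ge> 0"
    and q_dens: "\<And>\<theta>. (\<integral>\<^sup>+ t. ennreal (q \<theta> t) \<partial>\<mu>) = 1"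
    and H_pos: "0 < Hconst \<mu> p \<nu> f y \<epsilon>" and H_fin: "Hconst \<mu> p \<nu> f y \<epsilon> < \<infinity>"
    and q_Q0: "Q0 \<mu> \<theta>0 q"
    and pi_tails: "\<And>r. r > 0 \<Longrightarrow> emeasure (post \<mu> p \<nu> f y \<epsilon>) (- ball \<theta>0 r) > 0"
    and h_tails: "\<And>\<delta>. \<delta> > 0 \<Longrightarrow> \<exists>v>0. (SUP \<theta>\<in>- ball \<theta>0 v. hfun \<nu> f y \<epsilon> \<theta>) < \<delta>"
    and N_pos: "N \<ge> 1"
  shows "\<not> variance_bounding (post \<mu> p \<nu> f y \<epsilon>) (P2N_op \<mu> \<nu> f p q y \<epsilon> N)"
proof -
  interpret P4 \<mu> \<nu> p f q y \<epsilon> \<theta>0 N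
    by (rule P4.intro) (fact assms)+
  show ?thesis by (rule main)
qed

end
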